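(* For each integer $n>1$, there exists a connected $(3n-2)$-regular integral graph with $6n$ vertices.
   Context: A graph is integral if all eigenvalues of its adjacency matrix are integers. *)

theory Defs
  imports "Jordan_Normal_Form.Char_Poly"
begin

definition simple_graph :: "nat \<Rightarrow> (nat \<Rightarrow> nat \<Rightarrow> bool) \<Rightarrow> bool" where
  "simple_graph n E \<longleftrightarrow>
     (\<forall>i j. E i j \<longrightarrow> i < n \<and> j < n) \<and>
     (\<forall>i j. E i j \<longrightarrow> E j i) \<and>
     (\<forall>i. \<not> E i i)"

definition adj_matrix :: "nat \<Rightarrow> (nat \<Rightarrow> nat \<Rightarrow> bool) \<Rightarrow> complex mat" where
  "adj_matrix n E = mat n n (\<lambda>(i, j). if E i j then 1 else 0)"

definition regular_graph :: "nat \<Rightarrow> (nat \<Rightarrow> nat \<Rightarrow> bool) \<Rightarrow> nat \<Rightarrow> bool" where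
  "regular_graph n E k \<longleftrightarrow> (\<forall>i<n. card {j. j < n \<and> E i j} = k)"

definition connected_graph :: "nat \<Rightarrow> (nat \<Rightarrow> nat \<Rightarrow> bool) \<Rightarrow> bool" where
  "connected_graph n E \<longleftrightarrow> n > 0 \<and> (\<forall>i<n. \<forall>j<n. E\<^sup>*\<^sup>* i j)"

definition integral_graph :: "nat \<Rightarrow> (nat \<Rightarrow> nat \<Rightarrow> bool) \<Rightarrow> bool" where
  "integral_graph n E \<longleftrightarrow> (\<forall>ev. eigenvalue (adj_matrix n E) ev \<longrightarrow> ev \<in> \<int>)"

end

theory Submission
  imports Defs
begin

definition G :: "nat \<Rightarrow> nat \<Rightarrow> nat \<Rightarrow> bool" where
  "G n u v \<longleftrightarrow> u < 6*n \<and> v < 6*n \<and> u \<noteq> v \<and>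
     ((u mod 2 = v mod 2 \<and> u div 6 \<noteq> v div 6) \<or> u div 2 = v div 2)"

definition pt :: "nat \<Rightarrow> nat" where "pt i = (if even i then i+1 else i-1)"

definition T :: "(nat \<Rightarrow> 'a::comm_ring_1) \<Rightarrow> nat \<Rightarrow> nat \<Rightarrow> 'a" where
  "T f s p = f (6*p+s) + f (6*p+s+2) + f (6*p+s+4)"

lemma sum6: "(\<Sum>j<6*n. g j) = (\<Sum>p<n. g(6*p)+g(6*p+1)+g(6*p+2)+g(6*p+3)+g(6*p+4)+g(6*p+5))"
  for g :: "nat \<Rightarrow> 'a::comm_monoid_add"
proof (induction n)
  case 0 then show ?case by simp
next
  case (Suc n)
  have e: "6 * Suc n = Suc(Suc(Suc(Suc(Suc(Suc(6*n))))))" by simp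
  have a: "Suc (Suc (Suc (6*n))) = 3 + 6*n" "Suc (3+6*n) = 4+6*n" "Suc(4+6*n) = 5+6*n" by simp_all
  show ?case unfolding e by (simp only: sum.lessThan_Suc, simp only: Suc a, simp add: ac_simps)
qed

lemma sum_if_one: fixes n :: nat assumes "q < n"
  shows "(\<Sum>p<n. if p = q then a else h p) = (\<Sum>p<n. h p) - h q + (a::'a::comm_ring_1)"
proof -
  have "(\<Sum>p<n. if p = q then a else h p) = (\<Sum>p<n. h p + (if p = q then a - h q else 0))"
    by (rule sum.cong) auto
  also have "\<dots> = (\<Sum>p<n. h p) + (a - h q)" using assms by (simp add: sum.distrib)
  finally show ?thesis by simp
qed

lemma G_char:
  assumes "q < n" "p < n" "r0 < 6" "r < 6"
  shows "G n (6*q+r0) (6*p+r) \<longleftrightarrow>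
    (p \<noteq> q \<and> r mod 2 = r0 mod 2) \<or> (p = q \<and> r div 2 = r0 div 2 \<and> r \<noteq> r0)"
proof -
  have "6*q+r0 < 6*n" "6*p+r < 6*n" using assms by linarith+
  moreover have "(6*q+r0) mod 2 = r0 mod 2" "(6*p+r) mod 2 = r mod 2" by presburger+
  moreover have "(6*q+r0) div 6 = q" "(6*p+r) div 6 = p" using assms by presburger+
  moreover have "(6*q+r0) div 2 = 3*q + r0 div 2" "(6*p+r) div 2 = 3*p + r div 2" by presburger+
  ultimately have Gd: "G n (6*q+r0) (6*p+r) \<longleftrightarrow> 6*q+r0 \<noteq> 6*p+r \<and>
      ((r0 mod 2 = r mod 2 \<and> q \<noteq> p) \<or> 3*q + r0 div 2 = 3*p + r div 2)"
    unfolding G_def by simp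
  show ?thesis
  proof (cases "p = q")
    case True
    then show ?thesis unfolding Gd by auto
  next
    case False
    have "3*q + r0 div 2 \<noteq> 3*p + r div 2" "6*q+r0 \<noteq> 6*p+r"
      using False assms(3,4) by presburger+
    then show ?thesis unfolding Gd using False by auto
  qed
qed

lemma term_eq:
  fixes f :: "nat \<Rightarrow> 'a::comm_ring_1"
  assumes "i < 6*n" "p < n"
  shows "(if G n i (6 * p) then f (6 * p) else 0) + (if G n i (6 * p + 1) then f (6 * p + 1) else 0) +
          (if G n i (6 * p + 2) then f (6 * p + 2) else 0) + (if G n i (6 * p + 3) then f (6 * p + 3) else 0) +
          (if G n i (6 * p + 4) then f (6 * p + 4) else 0) + (if G n i (6 * p + 5) then f (6 * p + 5) else 0) =
          (if p = i div 6 then f (pt i) else T f (i mod 2) p)"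
proof -
  define q where "q = i div 6"
  define r0 where "r0 = i mod 6"
  have i: "i = 6*q+r0" "r0 < 6" unfolding q_def r0_def by simp_all
  have qn: "q < n" using assms unfolding q_def by linarith
  have G0: "G n i (6*p+0) \<longleftrightarrow> (p \<noteq> q \<and> 0 = r0 mod 2) \<or> (p = q \<and> 0 = r0 div 2 \<and> 0 \<noteq> r0)"
    using G_char[OF qn assms(2) i(2), of 0] i by simp
  have G1: "G n i (6*p+1) \<longleftrightarrow> (p \<noteq> q \<and> 1 = r0 mod 2) \<or> (p = q \<and> 0 = r0 div 2 \<and> 1 \<noteq> r0)"
    using G_char[OF qn assms(2) i(2), of 1] i by simp
  have G2: "G n i (6*p+2) \<longleftrightarrow> (p \<noteq> q \<and> 0 = r0 mod 2) \<or> (p = q \<and> 1 = r0 div 2 \<and> 2 \<noteq> r0)"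
    using G_char[OF qn assms(2) i(2), of 2] i by simp
  have G3: "G n i (6*p+3) \<longleftrightarrow> (p \<noteq> q \<and> 1 = r0 mod 2) \<or> (p = q \<and> 1 = r0 div 2 \<and> 3 \<noteq> r0)"
    using G_char[OF qn assms(2) i(2), of 3] i by simp
  have G4: "G n i (6*p+4) \<longleftrightarrow> (p \<noteq> q \<and> 0 = r0 mod 2) \<or> (p = q \<and> 2 = r0 div 2 \<and> 4 \<noteq> r0)"
    using G_char[OF qn assms(2) i(2), of 4] i by simp
  have G5: "G n i (6*p+5) \<longleftrightarrow> (p \<noteq> q \<and> 1 = r0 mod 2) \<or> (p = q \<and> 2 = r0 div 2 \<and> 5 \<noteq> r0)"
    using G_char[OF qn assms(2) i(2), of 5] i by simp
  have im: "i mod 2 = r0 mod 2" using i by presburger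
  have s3: "\<And>x::nat. Suc (Suc (Suc x)) = 3 + x" by simp
  have "r0 = 0 \<or> r0 = 1 \<or> r0 = 2 \<or> r0 = 3 \<or> r0 = 4 \<or> r0 = 5" using i by auto
  then show ?thesis
    unfolding G0[simplified] G1 G2 G3 G4 G5 q_def[symmetric] im
    by (elim disjE; cases "p = q") (simp_all add: T_def pt_def i add_ac s3)
qed

lemma nbr_sum:
  fixes f :: "nat \<Rightarrow> 'a::comm_ring_1"
  assumes "i < 6*n"
  shows "(\<Sum>j<6*n. if G n i j then f j else 0) =
     (\<Sum>p<n. T f (i mod 2) p) - T f (i mod 2) (i div 6) + f (pt i)"
proof -
  have "(\<Sum>j<6*n. if G n i j then f j else 0) =
     (\<Sum>p<n. (if p = i div 6 then f (pt i) else T f (i mod 2) p))"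
    unfolding sum6
  proof (rule sum.cong[OF refl])
    fix p assume "p \<in> {..<n}"
    then have p: "p < n" by simp
    show "(if G n i (6 * p) then f (6 * p) else 0) + (if G n i (6 * p + 1) then f (6 * p + 1) else 0) +
          (if G n i (6 * p + 2) then f (6 * p + 2) else 0) + (if G n i (6 * p + 3) then f (6 * p + 3) else 0) +
          (if G n i (6 * p + 4) then f (6 * p + 4) else 0) + (if G n i (6 * p + 5) then f (6 * p + 5) else 0) =
          (if p = i div 6 then f (pt i) else T f (i mod 2) p)"
      by (rule term_eq[OF assms p])
  qed
  also have "\<dots> = (\<Sum>p<n. T f (i mod 2) p) - T f (i mod 2) (i div 6) + f (pt i)"
    by (rule sum_if_one) (use assms in auto)
  finally show ?thesis .
qed

lemma card_nbr:
  assumes "i < 6*n"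
  shows "card {j. j < 6*n \<and> G n i j} = 3*n - 2"
proof -
  have "int (card {j. j < 6*n \<and> G n i j}) = (\<Sum>j\<in>{j\<in>{..<6*n}. G n i j}. (1::int))"
    by simp
  also have "\<dots> = (\<Sum>j<6*n. if G n i j then (\<lambda>_. 1::int) j else 0)"
    by (rule sum.inter_filter) simp
  also have "\<dots> = (\<Sum>p<n. T (\<lambda>_. 1::int) (i mod 2) p) - T (\<lambda>_. 1::int) (i mod 2) (i div 6) + 1"
    using nbr_sum[OF assms, of "\<lambda>_. 1::int"] by simp
  also have "\<dots> = 3 * int n - 2" by (simp add: T_def)
  finally show ?thesis using assms by linarith
qed


lemma pair0:
  fixes a x y :: complex
  assumes "a*x = y" "a*y = x" "a \<noteq> 1" "a \<noteq> -1"
  shows "x = 0 \<and> y = 0"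
proof -
  have "(a-1)*((a+1)*x) = a*(a*x) - x" by (simp add: algebra_simps)
  also have "\<dots> = 0" using assms by simp
  finally have z: "(a-1)*((a+1)*x) = 0" .
  have "a + 1 \<noteq> 0" using assms(4) by (simp add: eq_neg_iff_add_eq_0[symmetric])
  then have "x = 0" using z assms(3) by simp
  then show ?thesis using assms by simp
qed

lemma not_int_ne: "(l::complex) \<notin> \<int> \<Longrightarrow> l \<noteq> of_int k"
  by auto

lemma eig_int:
  fixes f :: "nat \<Rightarrow> complex" and l :: complex
  assumes eq: "\<And>i. i < 6*n \<Longrightarrow> l * f i = (\<Sum>p<n. T f (i mod 2) p) - T f (i mod 2) (i div 6) + f (pt i)"
    and nz: "i0 < 6*n" "f i0 \<noteq> 0"
  shows "l \<in> \<int>"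
proof (rule ccontr)
  assume ni: "l \<notin> \<int>"
  define S where "S s = (\<Sum>p<n. T f s p)" for s
  have E0: "l * f (6*p+2*k) = S 0 - T f 0 p + f (6*p+2*k+1)" if "p < n" "k < 3" for p k
  proof -
    have "6*p+2*k < 6*n" using that by linarith
    from eq[OF this] show ?thesis using that
      by (simp add: S_def pt_def)
  qed
  have E1: "l * f (6*p+2*k+1) = S 1 - T f 1 p + f (6*p+2*k)" if "p < n" "k < 3" for p k
  proof -
    have "6*p+2*k+1 < 6*n" using that by linarith
    moreover have "(6*p+2*k+1) mod 2 = 1" "(6*p+2*k+1) div 6 = p" "\<not> even (6*p+2*k+1)"
      using that by presburger+
    ultimately show ?thesis using eq[of "6*p+2*k+1"]
      by (simp add: S_def pt_def)
  qed
  have T0: "l * T f 0 p = 3 * (S 0 - T f 0 p) + T f 1 p" if "p < n" for p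
  proof -
    have ar: "6*p+2*0 = 6*p" "6*p+2*0+1 = 6*p+1" "6*p+2*1 = 6*p+2" "6*p+2*1+1 = 6*p+3"
      "6*p+2*2 = 6*p+4" "6*p+2*2+1 = 6*p+5" "6*p+2+1 = 6*p+3" "6*p+4+1 = 6*p+5" "6*p+1+2 = 6*p+3" "6*p+1+4 = 6*p+5" "6*p+0 = 6*p" by simp_all
    have ks: "(0::nat) < 3" "(1::nat) < 3" "(2::nat) < 3" by simp_all
    have e0: "l * f (6*p) = S 0 - T f 0 p + f (6*p+1)" using E0[OF that ks(1)] by (simp only: ar)
    have e1: "l * f (6*p+2) = S 0 - T f 0 p + f (6*p+3)" using E0[OF that ks(2)] by (simp only: ar)
    have e2: "l * f (6*p+4) = S 0 - T f 0 p + f (6*p+5)" using E0[OF that ks(3)] by (simp only: ar)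
    have "l * T f 0 p = l * f (6*p) + l * f (6*p+2) + l * f (6*p+4)"
      by (simp add: T_def distrib_left)
    also have "\<dots> = (S 0 - T f 0 p + f (6*p+1)) + (S 0 - T f 0 p + f (6*p+3)) + (S 0 - T f 0 p + f (6*p+5))"
      by (simp only: e0 e1 e2)
    also have "\<dots> = 3 * (S 0 - T f 0 p) + T f 1 p" by (simp only: T_def ar) (simp add: algebra_simps)
    finally show ?thesis .
  qed
  have T1: "l * T f 1 p = 3 * (S 1 - T f 1 p) + T f 0 p" if "p < n" for p
  proof -
    have ar: "6*p+2*0 = 6*p" "6*p+2*0+1 = 6*p+1" "6*p+2*1 = 6*p+2" "6*p+2*1+1 = 6*p+3"
      "6*p+2*2 = 6*p+4" "6*p+2*2+1 = 6*p+5" "6*p+2+1 = 6*p+3" "6*p+4+1 = 6*p+5" "6*p+1+2 = 6*p+3" "6*p+1+4 = 6*p+5" "6*p+0 = 6*p" by simp_all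
    have ks: "(0::nat) < 3" "(1::nat) < 3" "(2::nat) < 3" by simp_all
    have e0: "l * f (6*p+1) = S 1 - T f 1 p + f (6*p)" using E1[OF that ks(1)] by (simp only: ar)
    have e1: "l * f (6*p+3) = S 1 - T f 1 p + f (6*p+2)" using E1[OF that ks(2)] by (simp only: ar)
    have e2: "l * f (6*p+5) = S 1 - T f 1 p + f (6*p+4)" using E1[OF that ks(3)] by (simp only: ar)
    have "l * T f 1 p = l * f (6*p+1) + l * f (6*p+3) + l * f (6*p+5)"
      by (simp only: T_def distrib_left ar)
    also have "\<dots> = (S 1 - T f 1 p + f (6*p)) + (S 1 - T f 1 p + f (6*p+2)) + (S 1 - T f 1 p + f (6*p+4))"
      by (simp only: e0 e1 e2)
    also have "\<dots> = 3 * (S 1 - T f 1 p) + T f 0 p" by (simp only: T_def ar) (simp add: algebra_simps)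
    finally show ?thesis .
  qed
  have S0: "l * S 0 = 3 * (of_nat n * S 0 - S 0) + S 1"
  proof -
    have "l * S 0 = (\<Sum>p<n. l * T f 0 p)" by (simp add: S_def sum_distrib_left)
    also have "\<dots> = (\<Sum>p<n. 3 * (S 0 - T f 0 p) + T f 1 p)"
      using T0 by (intro sum.cong) auto
    also have "\<dots> = 3 * (of_nat n * S 0 - S 0) + S 1"
      by (simp add: sum.distrib sum_subtractf sum_distrib_left[symmetric] S_def[symmetric])
    finally show ?thesis .
  qed
  have S1: "l * S 1 = 3 * (of_nat n * S 1 - S 1) + S 0"
  proof -
    have "l * S 1 = (\<Sum>p<n. l * T f 1 p)" by (simp add: S_def sum_distrib_left)
    also have "\<dots> = (\<Sum>p<n. 3 * (S 1 - T f 1 p) + T f 0 p)"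
      using T1 by (intro sum.cong) auto
    also have "\<dots> = 3 * (of_nat n * S 1 - S 1) + S 0"
      by (simp add: sum.distrib sum_subtractf sum_distrib_left[symmetric] S_def[symmetric])
    finally show ?thesis .
  qed
  have a1: "l - (3 * of_nat n - 3) \<noteq> 1"
    using not_int_ne[OF ni, of "3 * int n - 2"] by (auto simp: algebra_simps)
  have a2: "l - (3 * of_nat n - 3) \<noteq> -1"
    using not_int_ne[OF ni, of "3 * int n - 4"] by (auto simp: algebra_simps)
  have "S 0 = 0 \<and> S 1 = 0"
    by (rule pair0[OF _ _ a1 a2]) (use S0 S1 in \<open>simp add: algebra_simps\<close>)+
  then have Sz: "S 0 = 0" "S 1 = 0" by auto
  have b1: "l + 3 \<noteq> 1"
  proof
    assume "l + 3 = 1" then have "l = 1 - 3" by (metis add_diff_cancel_right')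
    then show False using not_int_ne[OF ni, of "-2"] by simp
  qed
  have b2: "l + 3 \<noteq> -1"
  proof
    assume "l + 3 = -1" then have "l = -1 - 3" by (metis add_diff_cancel_right')
    then show False using not_int_ne[OF ni, of "-4"] by simp
  qed
  have Tz: "T f 0 p = 0 \<and> T f 1 p = 0" if "p < n" for p
    by (rule pair0[OF _ _ b1 b2]) (use T0[OF that] T1[OF that] Sz in \<open>simp add: algebra_simps\<close>)+
  have c1: "l \<noteq> 1" using not_int_ne[OF ni, of 1] by auto
  have c2: "l \<noteq> -1" using not_int_ne[OF ni, of "-1"] by auto
  have fz: "f (6*p+2*k) = 0 \<and> f (6*p+2*k+1) = 0" if "p < n" "k < 3" for p k
    by (rule pair0[OF _ _ c1 c2]) (use E0[OF that] E1[OF that] Sz Tz[OF that(1)] in simp)+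
  have dec: "i0 = 6*(i0 div 6) + 2*((i0 mod 6) div 2) + i0 mod 2" by presburger
  have k3: "(i0 mod 6) div 2 < 3" by presburger
  have pn: "i0 div 6 < n" using nz(1) by linarith
  have "i0 mod 2 = 0 \<or> i0 mod 2 = 1" by presburger
  then have "f i0 = 0"
  proof
    assume "i0 mod 2 = 0" then show ?thesis using fz[OF pn k3] dec by simp
  next
    assume "i0 mod 2 = 1" then show ?thesis using fz[OF pn k3] dec by simp
  qed
  with nz(2) show False by simp
qed


lemma G_sym: "G n i j \<Longrightarrow> G n j i"
  unfolding G_def by auto

lemma to0:
  assumes "n > 1" "i < 6*n"
  shows "(G n)\<^sup>*\<^sup>* i 0"
proof -
  have ev: "(G n)\<^sup>*\<^sup>* i 0" if "even i" "i < 6*n" for i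
  proof (cases "i div 6 = 0")
    case False
    then have "G n i 0" using that assms unfolding G_def by auto
    then show ?thesis by auto
  next
    case True
    show ?thesis
    proof (cases "i = 0")
      case True then show ?thesis by simp
    next
      case False
      have g1: "G n i 6" using that assms \<open>i div 6 = 0\<close> False unfolding G_def by auto
      have g2: "G n 6 0" using assms unfolding G_def by auto
      show ?thesis using converse_rtranclp_into_rtranclp[OF g1 r_into_rtranclp[of "G n", OF g2]] .
    qed
  qed
  show ?thesis
  proof (cases "even i")
    case True then show ?thesis using ev assms by auto
  next
    case False
    then have "G n i (i-1)" using assms unfolding G_def
      by (auto elim!: oddE)
    moreover have "(G n)\<^sup>*\<^sup>* (i-1) 0" using ev[of "i-1"] False assms by auto
    ultimately show ?thesis by (rule converse_rtranclp_into_rtranclp)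
  qed
qed

lemma conn:
  assumes "n > 1" "i < 6*n" "j < 6*n"
  shows "(G n)\<^sup>*\<^sup>* i j"
proof -
  have c: "(G n)\<inverse>\<inverse> = G n" using G_sym by (auto intro!: ext)
  have "(G n)\<^sup>*\<^sup>* j 0" using to0 assms by auto
  then have "((G n)\<inverse>\<inverse>)\<^sup>*\<^sup>* 0 j" unfolding rtranclp_conversep by simp
  then have "(G n)\<^sup>*\<^sup>* 0 j" unfolding c .
  with to0[OF assms(1,2)] show ?thesis by (rule rtranclp_trans)
qed

theorem corollary4p6:
  fixes n :: nat
  assumes "n > 1"
  shows "\<exists>E. simple_graph (6 * n) E \<and> connected_graph (6 * n) E \<and>
             regular_graph (6 * n) E (3 * n - 2) \<and> integral_graph (6 * n) E"
proof (intro exI conjI)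
  show "simple_graph (6 * n) (G n)"
    unfolding simple_graph_def using G_sym by (auto simp: G_def)
  show "connected_graph (6 * n) (G n)"
    unfolding connected_graph_def using conn assms by auto
  show "regular_graph (6 * n) (G n) (3 * n - 2)"
    unfolding regular_graph_def using card_nbr by auto
  show "integral_graph (6 * n) (G n)"
    unfolding integral_graph_def
  proof (intro allI impI)
    fix ev assume "eigenvalue (adj_matrix (6 * n) (G n)) ev"
    then obtain v where v: "eigenvector (adj_matrix (6 * n) (G n)) v ev"
      unfolding eigenvalue_def by auto
    define A where "A = adj_matrix (6 * n) (G n)"
    have dA: "dim_row A = 6*n" "dim_col A = 6*n" by (simp_all add: A_def adj_matrix_def)
    have vc: "v \<in> carrier_vec (6*n)" and vnz: "v \<noteq> 0\<^sub>v (6*n)" and Av: "A *\<^sub>v v = ev \<cdot>\<^sub>v v"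
      using v dA unfolding eigenvector_def A_def by auto
    have dv: "dim_vec v = 6*n" using vc by auto
    define f where "f j = v $ j" for j
    have eq: "ev * f i = (\<Sum>p<n. T f (i mod 2) p) - T f (i mod 2) (i div 6) + f (pt i)"
      if i: "i < 6*n" for i
    proof -
      have "ev * f i = (A *\<^sub>v v) $ i" using Av i dv by (simp add: f_def)
      also have "\<dots> = (\<Sum>j<6*n. (if G n i j then 1 else 0) * v $ j)"
        using i dA dv by (simp add: scalar_prod_def A_def adj_matrix_def atLeast0LessThan)
      also have "\<dots> = (\<Sum>j<6*n. if G n i j then f j else 0)"
        by (intro sum.cong) (auto simp: f_def)
      also have "\<dots> = (\<Sum>p<n. T f (i mod 2) p) - T f (i mod 2) (i div 6) + f (pt i)"
        by (rule nbr_sum[OF i])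
      finally show ?thesis .
    qed
    obtain i0 where i0: "i0 < 6*n" "f i0 \<noteq> 0"
      using vnz dv unfolding f_def by (metis eq_vecI index_zero_vec(1,2))
    show "ev \<in> \<int>" by (rule eig_int[OF eq i0])
  qed
qed

end
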